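(* Let $(\mathbb S,+,\cdot)$ be an S-Ring with Base Unit $A$, and let $m\in\mathbb S_0$ and $s\in\mathbb S$. Then there exist $x,y\in\mathbb S_0$ with $s=x-1+y\cdot A$, and for such $x,y$ one has $m\cdot s=m\cdot(x-y)+y-1+(m\cdot y)\cdot A$.
   Context: An S-Structure is a triple $(\mathbb S,+,\cdot)$ where $\mathbb S$ is a set and $+,\cdot$ are binary operations on $\mathbb S$ such that: $(\mathbb S,+)$ is a commutative group with identity $0$ (the inverse of $s$ is written $-s$, and $s-t:=s+(-t)$); $\mathbb S$ is closed under $\cdot$; and there exists $s\in\mathbb S$ with $0\cdot s\neq 0$ or $s\cdot 0\neq 0$. Multiplication binds tighter than addition. The structures considered come with a distinguished element of $\mathbb S$ denoted $1$. It is Commutative if $s\cdot t=t\cdot s$ for all $s,t$. For a Commutative S-Structure and $\alpha\in\mathbb S$, put $\mathbb S_\alpha=\{s\in\mathbb S:0\cdot s=s\cdot 0=\alpha\}$ and $\Lambda=\{\alpha\in\mathbb S:\mathbb S_\alpha\neq\emptyset\}$. Wheel Distributive: $s\cdot(t+r)+(s\cdot 0)=(s\cdot t)+(s\cdot r)$ for all $s,t,r\in\mathbb S$. S-Associative: for all $m,n\in\mathbb S_0$ and $s\in\mathbb S$, $m\cdot(n\cdot s)=(m\cdot n)\cdot s-([(m-1)\cdot(n-1)]\cdot(0\cdot s))$. Base: if $\mathbb S_0\neq\emptyset$ and $\alpha\in\Lambda$, $q\in\mathbb S_\alpha$ is a Base for $\mathbb S_\alpha$ if $q+\beta\in\mathbb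 S_\alpha$ for all $\beta\in\mathbb S_0$ and every $s\in\mathbb S_\alpha$ equals $q+\beta$ for some $\beta\in\mathbb S_0$. Coordinated: $\mathbb S_0\neq\emptyset$ and every $\mathbb S_\alpha$ with $\alpha\in\Lambda$ has a Base. Standard Bases: a Coordinated Commutative S-Structure has Standard Bases if there is a specified element $q_0(1)\in\mathbb S_1$ which is a Base for $\mathbb S_1$, and for every $\alpha\in\Lambda$ the element $q_0(\alpha):=\alpha\cdot(q_0(1)+1)-1$ lies in $\mathbb S_\alpha$ and is a Base for $\mathbb S_\alpha$. The Base Unit is $A:=q_0(1)+1$. An Essential S-Structure is an S-Structure that is Commutative, Wheel Distributive, S-Associative, has Standard Bases (in particular is Coordinated), satisfies $0,1\in\mathbb S_0$, and satisfies $\mathbb S_0=\{1\cdot x:x\in\mathbb S_0\}$. A Unity is an element $e\in\Lambda$ with $e\cdot s=s\cdot e=s$ for all $s\in\mathbb S$. An S-Ring is an Essential S-Structure which has a Unity. *)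

theory Defs
  imports Main
begin

text \<open>An S-Structure on the carrier given by the whole type 'a.
  add = +, mul = \<cdot>, zero = 0, neg = additive inverse, one = distinguished 1.\<close>

definition S_structure :: "('a \<Rightarrow> 'a \<Rightarrow> 'a) \<Rightarrow> ('a \<Rightarrow> 'a \<Rightarrow> 'a) \<Rightarrow> 'a \<Rightarrow> ('a \<Rightarrow> 'a) \<Rightarrow> bool" where
  "S_structure add mul zero neg \<longleftrightarrow>
     (\<forall>a b c. add (add a b) c = add a (add b c)) \<and>
     (\<forall>a b. add a b = add b a) \<and>
     (\<forall>a. add zero a = a) \<and>
     (\<forall>a. add a (neg a) = zero) \<and>
     (\<exists>s. mul zero s \<noteq> zero \<or> mul s zero \<noteq> zero)"

definition S_sub :: "('a \<Rightarrow> 'a \<Rightarrow> 'a) \<Rightarrow> ('a \<Rightarrow> 'a) \<Rightarrow> 'a \<Rightarrow> 'a \<Rightarrow> 'a" where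
  "S_sub add neg a b = add a (neg b)"

definition S_commutative :: "('a \<Rightarrow> 'a \<Rightarrow> 'a) \<Rightarrow> bool" where
  "S_commutative mul \<longleftrightarrow> (\<forall>s t. mul s t = mul t s)"

definition S_alpha :: "('a \<Rightarrow> 'a \<Rightarrow> 'a) \<Rightarrow> 'a \<Rightarrow> 'a \<Rightarrow> 'a set" where
  "S_alpha mul zero \<alpha> = {s. mul zero s = \<alpha> \<and> mul s zero = \<alpha>}"

definition S_Lambda :: "('a \<Rightarrow> 'a \<Rightarrow> 'a) \<Rightarrow> 'a \<Rightarrow> 'a set" where
  "S_Lambda mul zero = {\<alpha>. S_alpha mul zero \<alpha> \<noteq> {}}"

definition wheel_distributive :: "('a \<Rightarrow> 'a \<Rightarrow> 'a) \<Rightarrow> ('a \<Rightarrow> 'a \<Rightarrow> 'a) \<Rightarrow> 'a \<Rightarrow> bool" where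
  "wheel_distributive add mul zero \<longleftrightarrow>
     (\<forall>s t r. add (mul s (add t r)) (mul s zero) = add (mul s t) (mul s r))"

definition S_associative :: "('a \<Rightarrow> 'a \<Rightarrow> 'a) \<Rightarrow> ('a \<Rightarrow> 'a \<Rightarrow> 'a) \<Rightarrow> 'a \<Rightarrow> ('a \<Rightarrow> 'a) \<Rightarrow> 'a \<Rightarrow> bool" where
  "S_associative add mul zero neg one \<longleftrightarrow>
     (\<forall>m \<in> S_alpha mul zero zero. \<forall>n \<in> S_alpha mul zero zero. \<forall>s.
        mul m (mul n s) =
        S_sub add neg (mul (mul m n) s)
          (mul (mul (S_sub add neg m one) (S_sub add neg n one)) (mul zero s)))"

definition is_Base :: "('a \<Rightarrow> 'a \<Rightarrow> 'a) \<Rightarrow> ('a \<Rightarrow> 'a \<Rightarrow> 'a) \<Rightarrow> 'a \<Rightarrow> 'a \<Rightarrow> 'a \<Rightarrow> bool" where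
  "is_Base add mul zero \<alpha> q \<longleftrightarrow>
     q \<in> S_alpha mul zero \<alpha> \<and>
     (\<forall>\<beta> \<in> S_alpha mul zero zero. add q \<beta> \<in> S_alpha mul zero \<alpha>) \<and>
     (\<forall>s \<in> S_alpha mul zero \<alpha>. \<exists>\<beta> \<in> S_alpha mul zero zero. s = add q \<beta>)"

definition coordinated :: "('a \<Rightarrow> 'a \<Rightarrow> 'a) \<Rightarrow> ('a \<Rightarrow> 'a \<Rightarrow> 'a) \<Rightarrow> 'a \<Rightarrow> bool" where
  "coordinated add mul zero \<longleftrightarrow>
     S_alpha mul zero zero \<noteq> {} \<and>
     (\<forall>\<alpha> \<in> S_Lambda mul zero. \<exists>q. is_Base add mul zero \<alpha> q)"

text \<open>q0(\<alpha>) := \<alpha>\<cdot>(q0(1)+1) - 1, where q01 is the specified element q0(1).\<close>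
definition q0 :: "('a \<Rightarrow> 'a \<Rightarrow> 'a) \<Rightarrow> ('a \<Rightarrow> 'a \<Rightarrow> 'a) \<Rightarrow> ('a \<Rightarrow> 'a) \<Rightarrow> 'a \<Rightarrow> 'a \<Rightarrow> 'a \<Rightarrow> 'a" where
  "q0 add mul neg one q01 \<alpha> = S_sub add neg (mul \<alpha> (add q01 one)) one"

definition standard_bases :: "('a \<Rightarrow> 'a \<Rightarrow> 'a) \<Rightarrow> ('a \<Rightarrow> 'a \<Rightarrow> 'a) \<Rightarrow> 'a \<Rightarrow> ('a \<Rightarrow> 'a) \<Rightarrow> 'a \<Rightarrow> 'a \<Rightarrow> bool" where
  "standard_bases add mul zero neg one q01 \<longleftrightarrow>
     coordinated add mul zero \<and> S_commutative mul \<and>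
     is_Base add mul zero one q01 \<and>
     (\<forall>\<alpha> \<in> S_Lambda mul zero.
        q0 add mul neg one q01 \<alpha> \<in> S_alpha mul zero \<alpha> \<and>
        is_Base add mul zero \<alpha> (q0 add mul neg one q01 \<alpha>))"

definition base_unit :: "('a \<Rightarrow> 'a \<Rightarrow> 'a) \<Rightarrow> 'a \<Rightarrow> 'a \<Rightarrow> 'a" where
  "base_unit add one q01 = add q01 one"

definition essential :: "('a \<Rightarrow> 'a \<Rightarrow> 'a) \<Rightarrow> ('a \<Rightarrow> 'a \<Rightarrow> 'a) \<Rightarrow> 'a \<Rightarrow> ('a \<Rightarrow> 'a) \<Rightarrow> 'a \<Rightarrow> 'a \<Rightarrow> bool" where
  "essential add mul zero neg one q01 \<longleftrightarrow>
     S_structure add mul zero neg \<and>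
     S_commutative mul \<and>
     wheel_distributive add mul zero \<and>
     S_associative add mul zero neg one \<and>
     standard_bases add mul zero neg one q01 \<and>
     zero \<in> S_alpha mul zero zero \<and> one \<in> S_alpha mul zero zero \<and>
     S_alpha mul zero zero = {mul one x | x. x \<in> S_alpha mul zero zero}"

definition is_unity :: "('a \<Rightarrow> 'a \<Rightarrow> 'a) \<Rightarrow> 'a \<Rightarrow> 'a \<Rightarrow> bool" where
  "is_unity mul zero e \<longleftrightarrow> e \<in> S_Lambda mul zero \<and> (\<forall>s. mul e s = s \<and> mul s e = s)"

definition S_ring :: "('a \<Rightarrow> 'a \<Rightarrow> 'a) \<Rightarrow> ('a \<Rightarrow> 'a \<Rightarrow> 'a) \<Rightarrow> 'a \<Rightarrow> ('a \<Rightarrow> 'a) \<Rightarrow> 'a \<Rightarrow> 'a \<Rightarrow> bool" where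
  "S_ring add mul zero neg one q01 \<longleftrightarrow>
     essential add mul zero neg one q01 \<and> (\<exists>e. is_unity mul zero e)"

end

theory Submission
  imports Defs
begin

locale SR =
  fixes add mul :: "'a \<Rightarrow> 'a \<Rightarrow> 'a" and zero one q01 :: 'a and neg :: "'a \<Rightarrow> 'a"
  assumes ring: "S_ring add mul zero neg one q01"
begin

lemma ess: "essential add mul zero neg one q01" using ring unfolding S_ring_def by (elim conjE)
lemma sst: "S_structure add mul zero neg" using ess unfolding essential_def by (elim conjE)
lemma aa: "add (add a b) c = add a (add b c)" using sst unfolding S_structure_def by blast
lemma ac: "add a b = add b a" using sst unfolding S_structure_def by blast
lemma a0: "add zero a = a" using sst unfolding S_structure_def by blast
lemma an: "add a (neg a) = zero" using sst unfolding S_structure_def by blast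
lemma a0r: "add a zero = a" using a0[of a] ac[of zero a] by simp
lemma lc: "add a (add b c) = add b (add a c)"
  using aa[of a b c] aa[of b a c] ac[of a b] by simp
lemma an2: "add (neg a) a = zero" using an[of a] ac[of a "neg a"] by simp
lemma an3: "add a (add (neg a) b) = b" using an[of a] aa[of a "neg a" b] a0[of b] by simp
lemma an4: "add (neg a) (add a b) = b" using an2[of a] aa[of "neg a" a b] a0[of b] by simp
lemma canc: "add a b = add a c \<Longrightarrow> b = c" by (metis an4)
lemma negu: "add a b = zero \<Longrightarrow> b = neg a"
proof -
  assume h: "add a b = zero"
  have "add a b = add a (neg a)" by (simp only: h an)
  thus ?thesis by (rule canc)
qed
lemma nn: "neg (neg a) = a" using negu[OF an2[of a]] by (rule sym)
lemma nadd: "neg (add a b) = add (neg a) (neg b)"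
proof -
  have "add (add a b) (add (neg a) (neg b)) = add a (add (neg a) (add b (neg b)))"
    using aa[of a b "add (neg a) (neg b)"] lc[of b "neg a" "neg b"] by simp
  also have "\<dots> = zero" using an[of b] an[of a] a0r[of "neg a"] by simp
  finally show ?thesis by (rule negu[THEN sym])
qed
lemma nz: "neg zero = zero" using negu[OF a0[of zero]] by (rule sym)
lemma subz: "add a (neg b) = zero \<Longrightarrow> a = b"
proof -
  assume h: "add a (neg b) = zero"
  have "neg b = neg a" using negu[OF h] .
  hence "neg (neg b) = neg (neg a)" by simp
  thus ?thesis using nn by simp
qed

lemmas AC = aa ac lc an an2 an3 an4 a0 a0r nadd nn nz

lemma comm: "S_commutative mul" using ess unfolding essential_def by (elim conjE)
lemma wdd: "wheel_distributive add mul zero" using ess unfolding essential_def by (elim conjE)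
lemma sad: "S_associative add mul zero neg one" using ess unfolding essential_def by (elim conjE)
lemma mc: "mul a b = mul b a" using comm unfolding S_commutative_def by blast
lemma wd: "add (mul s (add t r)) (mul s zero) = add (mul s t) (mul s r)"
  using wdd unfolding wheel_distributive_def by blast

abbreviation S0 where "S0 \<equiv> S_alpha mul zero zero"

lemma S0_iff: "x \<in> S0 \<longleftrightarrow> mul zero x = zero"
  unfolding S_alpha_def using mc by auto

lemma sa: "m \<in> S0 \<Longrightarrow> n \<in> S0 \<Longrightarrow> mul m (mul n s) = add (mul (mul m n) s)
   (neg (mul (mul (add m (neg one)) (add n (neg one))) (mul zero s)))"
  using sad unfolding S_associative_def S_sub_def by blast

lemma z0: "zero \<in> S0" using ess unfolding essential_def by (elim conjE)
lemma o0: "one \<in> S0" using ess unfolding essential_def by (elim conjE)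
lemma S0eq: "S0 = {mul one x | x. x \<in> S0}" using ess unfolding essential_def by (elim conjE)

lemma m0: "m \<in> S0 \<Longrightarrow> mul m zero = zero"
  using S0_iff[of m] mc[of m zero] by simp

lemma S0D: "x \<in> S0 \<Longrightarrow> \<exists>y. y \<in> S0 \<and> x = mul one y"
proof -
  assume h: "x \<in> S0"
  have "S0 \<subseteq> {mul one x | x. x \<in> S0}" using S0eq by (rule equalityD1)
  hence "x \<in> {mul one x | x. x \<in> S0}" using h by (rule subsetD)
  thus ?thesis by blast
qed

lemma lin: "m \<in> S0 \<Longrightarrow> mul m (add a b) = add (mul m a) (mul m b)"
  using wd[of m a b] m0[of m] a0r by simp

lemma linn: "m \<in> S0 \<Longrightarrow> mul m (neg a) = neg (mul m a)"
proof -
  assume h: "m \<in> S0"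
  have "add (mul m a) (mul m (neg a)) = mul m (add a (neg a))" using lin[OF h] by simp
  also have "\<dots> = zero" using an[of a] m0[OF h] by simp
  finally show ?thesis by (rule negu)
qed

lemma S0add: "a \<in> S0 \<Longrightarrow> b \<in> S0 \<Longrightarrow> add a b \<in> S0"
  using lin[OF z0, of a b] S0_iff[of a] S0_iff[of b] S0_iff[of "add a b"] a0[of zero] by simp
lemma S0neg: "a \<in> S0 \<Longrightarrow> neg a \<in> S0"
  using linn[OF z0, of a] S0_iff[of a] S0_iff[of "neg a"] nz by simp

lemma n1: "neg one \<in> S0" using S0neg o0 by blast

lemma sb: "standard_bases add mul zero neg one q01" using ess unfolding essential_def by (elim conjE)

lemma zone: "mul zero one = zero" using o0 S0_iff by simp
lemma zz: "mul zero zero = zero" using z0 S0_iff by simp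

lemma fA: "mul zero (add q01 one) = one"
proof -
  have "is_Base add mul zero one q01" using sb unfolding standard_bases_def by (elim conjE)
  hence "mul zero q01 = one" unfolding is_Base_def S_alpha_def by blast
  thus ?thesis using lin[OF z0, of q01 one] zone a0r[of one] by simp
qed

lemma cc: "mul (neg one) (neg one) = mul one one"
proof -
  have "mul (neg one) (neg one) = neg (mul (neg one) one)" using linn[OF n1] by simp
  also have "mul (neg one) one = mul one (neg one)" using mc by simp
  also have "\<dots> = neg (mul one one)" using linn[OF o0] by simp
  finally show ?thesis using nn by simp
qed

lemma u1: "mul (mul one one) one = one"
proof -
  have e1: "mul zero (mul zero (add q01 one)) = zero" using fA zone by simp
  have e2: "mul zero (mul zero (add q01 one)) =
     add (mul (mul zero zero) (add q01 one)) (neg (mul (mul (add zero (neg one)) (add zero (neg one))) (mul zero (add q01 one))))"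
    using sa[OF z0 z0] by blast
  have "add one (neg (mul (mul one one) one)) = zero"
    using e1 e2 zz fA a0[of "neg one"] cc by simp
  thus ?thesis using subz by metis
qed

lemma unity: "\<exists>e. is_unity mul zero e" using ring unfolding S_ring_def by (elim conjE)

lemma uone: "mul one one = one"
proof -
  obtain e where e: "is_unity mul zero e" using unity by blast
  have eu: "\<And>s. mul e s = s" using e unfolding is_unity_def by blast
  have e0: "e \<in> S0" using eu[of zero] mc[of e zero] S0_iff by simp
  have w: "mul (add e (neg one)) (neg one) = add (neg one) (mul one one)"
  proof -
    have "mul (add e (neg one)) (neg one) = mul (neg one) (add e (neg one))" using mc by simp
    also have "\<dots> = add (mul (neg one) e) (mul (neg one) (neg one))" using lin[OF n1] by simp
    also have "mul (neg one) e = neg one" using eu[of "neg one"] mc[of e "neg one"] by simp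
    finally show ?thesis using cc by simp
  qed
  have w1: "mul (add (neg one) (mul one one)) one = add (neg (mul one one)) one"
  proof -
    have "mul (add (neg one) (mul one one)) one = mul one (add (neg one) (mul one one))" using mc by simp
    also have "\<dots> = add (mul one (neg one)) (mul one (mul one one))" using lin[OF o0] by simp
    also have "mul one (neg one) = neg (mul one one)" using linn[OF o0] by simp
    also have "mul one (mul one one) = one" using u1 mc[of one "mul one one"] by simp
    finally show ?thesis .
  qed
  have e1: "mul e (mul zero (add q01 one)) = one" using fA eu by simp
  have e2: "mul e (mul zero (add q01 one)) =
     add (mul (mul e zero) (add q01 one)) (neg (mul (mul (add e (neg one)) (add zero (neg one))) (mul zero (add q01 one))))"
    using sa[OF e0 z0] by blast
  have h: "one = add one (neg (add (neg (mul one one)) one))"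
    using e1 e2 m0[OF e0] fA a0[of "neg one"] w w1 by simp
  hence "add one (neg (add (neg (mul one one)) one)) = add one zero" using a0r by simp
  hence "neg (add (neg (mul one one)) one) = zero" by (rule canc)
  hence "neg (neg (add (neg (mul one one)) one)) = zero" using nz by simp
  hence "add (neg (mul one one)) one = zero" using nn by simp
  hence "one = neg (neg (mul one one))" by (rule negu)
  hence "one = mul one one" using nn[of "mul one one"] by (rule trans)
  thus ?thesis by (rule sym)
qed

lemma one_unit: "mul one s = s"
proof -
  obtain e where e: "is_unity mul zero e" using unity by blast
  have eu: "\<And>s. mul e s = s" using e unfolding is_unity_def by blast
  have e0: "e \<in> S0" using eu[of zero] mc[of e zero] S0_iff by simp
  obtain x0 where x0: "x0 \<in> S0" "e = mul one x0" using S0D[OF e0] by blast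
  have "mul one (mul one x0) = add (mul (mul one one) x0)
   (neg (mul (mul (add one (neg one)) (add one (neg one))) (mul zero x0)))"
    using sa[OF o0 o0] by blast
  hence h1: "mul one e = e" using x0 uone an S0_iff nz a0r zz by simp
  have "one = mul e one" using eu[of one] by (rule sym)
  also have "\<dots> = mul one e" by (rule mc)
  also have "\<dots> = e" by (rule h1)
  finally have "e = one" by (rule sym)
  thus ?thesis using eu by blast
qed

lemma dd: "mul zero (mul zero s) = zero"
proof -
  have "mul one (mul zero s) = add (mul (mul one zero) s)
   (neg (mul (mul (add one (neg one)) (add zero (neg one))) (mul zero s)))"
    using sa[OF o0 z0] by blast
  moreover have "mul zero (neg one) = zero" using n1 S0_iff by simp
  ultimately have "mul zero s = add (mul zero s) (neg (mul zero (mul zero s)))"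
    using one_unit an a0 by simp
  hence "add (mul zero s) zero = add (mul zero s) (neg (mul zero (mul zero s)))" using a0r by simp
  hence "zero = neg (mul zero (mul zero s))" using canc by blast
  thus ?thesis using nn nz by metis
qed

lemma part1: "\<exists>x \<in> S0. \<exists>y \<in> S0. s = add (add x (neg one)) (mul y (add q01 one))"
proof -
  define \<alpha> where "\<alpha> = mul zero s"
  have sa_: "s \<in> S_alpha mul zero \<alpha>" unfolding S_alpha_def \<alpha>_def using mc by auto
  hence L: "\<alpha> \<in> S_Lambda mul zero" unfolding S_Lambda_def by blast
  have "\<forall>\<alpha> \<in> S_Lambda mul zero. q0 add mul neg one q01 \<alpha> \<in> S_alpha mul zero \<alpha> \<and>
        is_Base add mul zero \<alpha> (q0 add mul neg one q01 \<alpha>)"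
    using sb unfolding standard_bases_def by (elim conjE)
  hence "is_Base add mul zero \<alpha> (q0 add mul neg one q01 \<alpha>)" using L by blast
  then obtain \<beta> where b: "\<beta> \<in> S0" "s = add (q0 add mul neg one q01 \<alpha>) \<beta>"
    using sa_ unfolding is_Base_def by blast
  have a0': "\<alpha> \<in> S0" unfolding \<alpha>_def S0_iff using dd by simp
  have "s = add (add \<beta> (neg one)) (mul \<alpha> (add q01 one))"
    using b(2) unfolding q0_def S_sub_def by (simp add: aa ac lc)
  thus ?thesis using a0' b(1) by blast
qed

lemma grp: "add (add X (neg m)) (add Q (neg (add (add P (neg y)) (neg (add m (neg one)))))) =
   add (add (add (add X (neg P)) y) (neg one)) Q"
proof -
  have "add (add X (neg m)) (add Q (neg (add (add P (neg y)) (neg (add m (neg one)))))) =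
    add m (add (neg m) (add (add (add (add X (neg P)) y) (neg one)) Q))"
    by (simp add: nadd nn aa ac lc)
  thus ?thesis using an3 by simp
qed

lemma part2:
  assumes m: "m \<in> S0" and x: "x \<in> S0" and y: "y \<in> S0"
    and s: "s = add (add x (neg one)) (mul y (add q01 one))"
  shows "mul m s = add (add (add (mul m (add x (neg y))) y) (neg one)) (mul (mul m y) (add q01 one))"
proof -
  define A where "A = add q01 one"
  have m1: "add m (neg one) \<in> S0" using S0add S0neg m o0 by blast
  have mone: "mul m one = m" using one_unit[of m] mc[of m one] by simp
  have ms: "mul m s = add (add (mul m x) (neg m)) (mul m (mul y A))"
    using s lin[OF m] linn[OF m] mone A_def by simp
  define k where "k = mul (add m (neg one)) (add y (neg one))"
  have my: "mul m (mul y A) = add (mul (mul m y) A) (neg (mul k one))"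
    using sa[OF m y, of A] fA A_def k_def by simp
  have k1: "mul k one = k" using one_unit[of k] mc[of k one] by simp
  have "k = add (mul (add m (neg one)) y) (neg (mul (add m (neg one)) one))"
    using k_def lin[OF m1] linn[OF m1] by simp
  also have "mul (add m (neg one)) y = add (mul y m) (neg y)"
    using mc[of "add m (neg one)" y] lin[OF y] linn[OF y] one_unit mc[of y one] by simp
  also have "mul (add m (neg one)) one = add m (neg one)"
    using one_unit mc[of "add m (neg one)" one] by simp
  finally have kk: "k = add (add (mul m y) (neg y)) (neg (add m (neg one)))" using mc[of y m] by simp
  have "mul m (add x (neg y)) = add (mul m x) (neg (mul m y))" using lin[OF m] linn[OF m] by simp
  hence rhs: "add (add (add (mul m (add x (neg y))) y) (neg one)) (mul (mul m y) A)
     = add (add (add (add (mul m x) (neg (mul m y))) y) (neg one)) (mul (mul m y) A)" by simp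
  show ?thesis unfolding A_def[symmetric] rhs ms my k1 unfolding kk
    by (rule grp)
qed

end

theorem proposition3p2p4:
  fixes add mul :: "'a \<Rightarrow> 'a \<Rightarrow> 'a" and zero one q01 m s :: 'a and neg :: "'a \<Rightarrow> 'a"
  assumes ring: "S_ring add mul zero neg one q01"
    and m: "m \<in> S_alpha mul zero zero"
  defines "A \<equiv> base_unit add one q01"
  shows "(\<exists>x \<in> S_alpha mul zero zero. \<exists>y \<in> S_alpha mul zero zero.
            s = add (S_sub add neg x one) (mul y A)) \<and>
         (\<forall>x \<in> S_alpha mul zero zero. \<forall>y \<in> S_alpha mul zero zero.
            s = add (S_sub add neg x one) (mul y A) \<longrightarrow>
            mul m s = add (S_sub add neg (add (mul m (S_sub add neg x y)) y) one) (mul (mul m y) A))"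
proof -
  interpret SR add mul zero one q01 neg using ring by unfold_locales
  have A: "A = add q01 one" unfolding A_def base_unit_def by (rule refl)
  show ?thesis
  proof (intro conjI ballI impI)
    obtain x y where "x \<in> S0" "y \<in> S0" "s = add (add x (neg one)) (mul y (add q01 one))"
      using part1 by blast
    thus "\<exists>x \<in> S0. \<exists>y \<in> S0. s = add (S_sub add neg x one) (mul y A)"
      unfolding A S_sub_def by blast
  next
    fix x y assume x: "x \<in> S0" and y: "y \<in> S0"
      and sx: "s = add (S_sub add neg x one) (mul y A)"
    show "mul m s = add (S_sub add neg (add (mul m (S_sub add neg x y)) y) one) (mul (mul m y) A)"
      unfolding A S_sub_def
      by (rule part2[OF m x y]) (use sx in \<open>unfold A S_sub_def\<close>)
  qed
qed

end
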